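(* Let $p>1$, $N\ge m$, and $\lambda>0$ be fixed. For almost all $(A,y)\in\mathbb R^{m\times N}\times\mathbb R^m$, the unique optimal solution $x^*$ of $\min_{x\in\mathbb R^N}\frac12\|Ax-y\|_2^2+\lambda\|x\|_p^p$ satisfies $|\mathrm{supp}(x^* )|=N$.
   Context: $\|x\|_p:=(\sum_i|x_i|^p)^{1/p}$; $\mathrm{supp}(x)=\{i:x_i\ne0\}$. "For almost all" means outside a set of Lebesgue measure zero. *)

theory Defs
  imports "HOL-Analysis.Analysis"
begin

definition lp_norm :: "real \<Rightarrow> real ^ 'n \<Rightarrow> real" where
  "lp_norm p x = (\<Sum>i\<in>UNIV. \<bar>x $ i\<bar> powr p) powr (1 / p)"

definition supp :: "real ^ 'n \<Rightarrow> 'n set" where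
  "supp x = {i. x $ i \<noteq> 0}"

definition lp_obj :: "real \<Rightarrow> real \<Rightarrow> real ^ 'n ^ 'm \<Rightarrow> real ^ 'm \<Rightarrow> real ^ 'n \<Rightarrow> real" where
  "lp_obj p lam A y x = 1 / 2 * (norm (A *v x - y))\<^sup>2 + lam * (lp_norm p x) powr p"

definition is_opt :: "real \<Rightarrow> real \<Rightarrow> real ^ 'n ^ 'm \<Rightarrow> real ^ 'm \<Rightarrow> real ^ 'n \<Rightarrow> bool" where
  "is_opt p lam A y x \<longleftrightarrow> (\<forall>z. lp_obj p lam A y x \<le> lp_obj p lam A y z)"

end

theory Submission
  imports Defs
begin

lemma psi_deriv:
  fixes p t :: real assumes "p > 1"
  shows "((\<lambda>s. \<bar>s\<bar> powr p) has_real_derivative (p * sgn t * \<bar>t\<bar> powr (p - 1))) (at t)"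
proof (cases "t > 0")
  case True
  have "((\<lambda>s. s powr p) has_real_derivative p * sgn t * \<bar>t\<bar> powr (p - 1)) (at t)"
    using has_real_derivative_powr[OF True] True by simp
  then show ?thesis
    by (rule has_field_derivative_transform_within_open[where S="{0<..}"]) (use True in auto)
next
  case False
  show ?thesis
  proof (cases "t < 0")
    case True
    have "((\<lambda>s. (-s) powr p) has_real_derivative p * (-t) powr (p - 1) * (-1)) (at t)"
      using True by (auto intro!: derivative_eq_intros)
    moreover have "p * (-t) powr (p - 1) * (-1) = p * sgn t * \<bar>t\<bar> powr (p - 1)" using True by simp
    ultimately have "((\<lambda>s. (-s) powr p) has_real_derivative p * sgn t * \<bar>t\<bar> powr (p - 1)) (at t)" by simp
    then show ?thesis
      by (rule has_field_derivative_transform_within_open[where S="{..<0}"]) (use True in auto)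
  next
    case False
    then have t0: "t = 0" using \<open>\<not> t>0\<close> by auto
    have lim: "((\<lambda>s. \<bar>s\<bar> powr (p - 1)) \<longlongrightarrow> 0) (at (0::real))"
      by (rule tendsto_zero_powrI) (auto intro!: tendsto_eq_intros simp: assms)
    have "((\<lambda>s. (\<bar>s\<bar> powr p - \<bar>0\<bar> powr p) / (s - 0)) \<longlongrightarrow> 0) (at (0::real))"
    proof (rule Lim_null_comparison[OF _ lim])
      show "\<forall>\<^sub>F x in at 0. norm ((\<bar>x\<bar> powr p - \<bar>0\<bar> powr p) / (x - 0)) \<le> \<bar>x\<bar> powr (p - 1)"
        unfolding eventually_at_filter
      proof (intro always_eventually allI impI)
        fix x :: real assume "x \<noteq> 0"
        then show "norm ((\<bar>x\<bar> powr p - \<bar>0\<bar> powr p) / (x - 0)) \<le> \<bar>x\<bar> powr (p - 1)"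
          using assms by (simp add: powr_diff abs_divide)
      qed
    qed
    then show ?thesis unfolding t0 has_field_derivative_iff by simp
  qed
qed

definition gd :: "real \<Rightarrow> real \<Rightarrow> real" where
  "gd p t = p * sgn t * \<bar>t\<bar> powr (p - 1)"

lemma gd_mono:
  fixes p s t :: real assumes "p > 1" "s < t"
  shows "gd p s < gd p t"
proof -
  consider "0 \<le> s" | "t \<le> 0" | "s < 0" "0 < t" using assms by linarith
  then show ?thesis
  proof cases
    case 1
    then have "\<bar>s\<bar> powr (p-1) < \<bar>t\<bar> powr (p-1)" using assms by (intro powr_less_mono2) auto
    then show ?thesis using 1 assms by (auto simp: gd_def sgn_if)
  next
    case 2
    then have "\<bar>t\<bar> powr (p-1) < \<bar>s\<bar> powr (p-1)" using assms by (intro powr_less_mono2) auto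
    then show ?thesis using 2 assms by (auto simp: gd_def sgn_if)
  next
    case 3
    have "0 < (-s) powr (p-1)" "0 < t powr (p-1)" using 3 by auto
    then have "- (p * (- s) powr (p - 1)) < p * t powr (p - 1)" using assms
      by (smt (verit) mult_pos_pos)
    then show ?thesis using 3 assms by (auto simp: gd_def sgn_if)
  qed
qed

definition hv :: "real \<Rightarrow> real \<Rightarrow> real \<Rightarrow> real" where
  "hv lam p w = sgn w * (\<bar>w\<bar> / (lam * p)) powr (1 / (p - 1))"

lemma hv_gd:
  fixes p lam s :: real assumes "p > 1" "lam > 0"
  shows "hv lam p (lam * gd p s) = s"
proof (cases "s = 0")
  case True then show ?thesis by (simp add: hv_def gd_def)
next
  case False
  have "\<bar>lam * gd p s\<bar> / (lam * p) = \<bar>s\<bar> powr (p - 1)"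
    using assms False by (simp add: gd_def abs_mult sgn_if)
  moreover have "(\<bar>s\<bar> powr (p - 1)) powr (1 / (p - 1)) = \<bar>s\<bar>"
    using assms by (simp add: powr_powr)
  moreover have "sgn (lam * gd p s) = sgn s"
    using assms False by (simp add: gd_def sgn_mult)
  ultimately show ?thesis by (simp add: hv_def sgn_mult_abs)
qed

lemma hv_diff:
  fixes p lam w :: real assumes "p > 1" "lam > 0" "w \<noteq> 0"
  shows "hv lam p differentiable (at w)"
proof (cases "w > 0")
  case True
  have "((\<lambda>w. (w / (lam * p)) powr (1 / (p - 1))) has_real_derivative
      (1 / (p - 1)) * (w / (lam * p)) powr (1 / (p - 1) - 1) * (1 / (lam * p))) (at w)"
    using True assms by (auto intro!: derivative_eq_intros)
  then have "(hv lam p has_real_derivative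
      (1 / (p - 1)) * (w / (lam * p)) powr (1 / (p - 1) - 1) * (1 / (lam * p))) (at w)"
    by (rule has_field_derivative_transform_within_open[where S="{0<..}"]) (use True in \<open>auto simp: hv_def\<close>)
  then show ?thesis using real_differentiable_def by blast
next
  case False
  then have F: "w < 0" using assms by auto
  have "((\<lambda>w. - (((-w) / (lam * p)) powr (1 / (p - 1)))) has_real_derivative
      - ((1 / (p - 1)) * ((-w) / (lam * p)) powr (1 / (p - 1) - 1) * (-1 / (lam * p)))) (at w)"
    using F assms by (auto intro!: derivative_eq_intros simp: divide_neg_pos)
  then have "(hv lam p has_real_derivative
      - ((1 / (p - 1)) * ((-w) / (lam * p)) powr (1 / (p - 1) - 1) * (-1 / (lam * p)))) (at w)"
    by (rule has_field_derivative_transform_within_open[where S="{..<0}"]) (use F in \<open>auto simp: hv_def\<close>)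
  then show ?thesis using real_differentiable_def by blast
qed

definition Fv :: "real \<Rightarrow> real \<Rightarrow> real ^ 'n ^ 'm \<Rightarrow> real ^ 'm \<Rightarrow> real ^ 'n \<Rightarrow> real" where
  "Fv p lam A y x = 1/2 * (\<Sum>k\<in>UNIV. ((A *v x)$k - y$k)^2) + lam * (\<Sum>i\<in>UNIV. \<bar>x$i\<bar> powr p)"

lemma lp_obj_eq:
  assumes "p > 0"
  shows "lp_obj p lam A y x = Fv p lam A y x"
proof -
  have S: "0 \<le> (\<Sum>i\<in>UNIV. \<bar>x$i\<bar> powr p)" by (intro sum_nonneg) auto
  have "(lp_norm p x) powr p = (\<Sum>i\<in>UNIV. \<bar>x$i\<bar> powr p)"
    unfolding lp_norm_def using assms S by (simp add: powr_powr)
  moreover have "(norm (A *v x - y))\<^sup>2 = (\<Sum>k\<in>UNIV. ((A *v x)$k - y$k)^2)"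
    unfolding norm_vec_def L2_set_def by (simp add: sum_nonneg)
  ultimately show ?thesis unfolding lp_obj_def Fv_def by simp
qed

lemma Fv_cont: "p > 0 \<Longrightarrow> continuous_on UNIV (Fv p lam A y)"
  unfolding Fv_def matrix_vector_mult_def
  by (auto intro!: continuous_intros continuous_on_powr')

lemma exists_min:
  fixes A :: "real ^ 'n ^ 'm"
  assumes "p > 1" "lam > 0"
  shows "\<exists>x. \<forall>z. Fv p lam A y x \<le> Fv p lam A y z"
proof -
  let ?F = "Fv p lam A y"
  define K where "K = {x. ?F x \<le> ?F 0}"
  have cont: "continuous_on UNIV ?F" by (rule Fv_cont) (use assms in auto)
  have cl: "closed K" unfolding K_def by (rule closed_Collect_le[OF cont]) auto
  define B where "B = (?F 0 / lam) powr (1/p)"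
  have bd: "\<bar>x$i\<bar> \<le> B" if "x \<in> K" for x i
  proof -
    have "lam * \<bar>x$i\<bar> powr p \<le> lam * (\<Sum>i\<in>UNIV. \<bar>x$i\<bar> powr p)"
      using assms by (intro mult_left_mono member_le_sum) auto
    also have "\<dots> \<le> ?F x" unfolding Fv_def by (auto intro!: sum_nonneg)
    also have "\<dots> \<le> ?F 0" using that K_def by auto
    finally have "\<bar>x$i\<bar> powr p \<le> ?F 0 / lam" using assms by (simp add: field_simps)
    then have "(\<bar>x$i\<bar> powr p) powr (1/p) \<le> (?F 0 / lam) powr (1/p)"
      using assms by (intro powr_mono2) auto
    then show ?thesis using assms by (simp add: powr_powr B_def)
  qed
  have "bounded K"
    unfolding bounded_iff
  proof (intro exI ballI)
    fix x assume "x \<in> K"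
    have "norm x \<le> (\<Sum>i\<in>UNIV. \<bar>x$i\<bar>)" by (rule norm_le_l1_cart)
    also have "\<dots> \<le> (\<Sum>i\<in>(UNIV::'n set). B)" using bd[OF \<open>x \<in> K\<close>] by (intro sum_mono) auto
    finally show "norm x \<le> real CARD('n) * B" by simp
  qed
  then have "compact K" using cl compact_eq_bounded_closed by blast
  moreover have "K \<noteq> {}" unfolding K_def by auto
  moreover have "continuous_on K ?F" using cont continuous_on_subset by blast
  ultimately obtain x where x: "x \<in> K" "\<forall>z\<in>K. ?F x \<le> ?F z"
    using continuous_attains_inf by blast
  have "?F x \<le> ?F z" for z
  proof (cases "z \<in> K")
    case True then show ?thesis using x by auto
  next
    case False
    then have "?F 0 < ?F z" unfolding K_def by auto
    moreover have "?F x \<le> ?F 0" using x K_def by auto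
    ultimately show ?thesis by auto
  qed
  then show ?thesis by blast
qed

lemma psi_chain:
  assumes "p > 1" "(f has_real_derivative f') (at x)"
  shows "((\<lambda>s. \<bar>f s\<bar> powr p) has_real_derivative gd p (f x) * f') (at x)"
  using DERIV_chain2[OF psi_deriv[OF assms(1)] assms(2)] by (simp add: gd_def)

lemma foc:
  fixes A :: "real ^ 'n ^ 'm"
  assumes "p > 1" "lam > 0" and opt: "\<forall>z. Fv p lam A y x \<le> Fv p lam A y z"
  shows "(\<Sum>k\<in>UNIV. A$k$j * (y$k - (A *v x)$k)) = lam * gd p (x$j)"
proof -
  define q where "q t = 1/2 * (\<Sum>k\<in>UNIV. ((A *v x)$k + t * A$k$j - y$k)^2)
     + lam * (\<bar>x$j + t\<bar> powr p + (\<Sum>i\<in>UNIV-{j}. \<bar>x$i\<bar> powr p))" for t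
  have eq: "Fv p lam A y (x + t *\<^sub>R axis j 1) = q t" for t
  proof -
    have "(A *v (x + t *\<^sub>R axis j 1))$k = (A *v x)$k + t * A$k$j" for k
    proof -
      have "(A *v (x + t *\<^sub>R axis j 1))$k = (\<Sum>i\<in>UNIV. A$k$i*x$i + (if i = j then A$k$j * t else 0))"
        unfolding matrix_vector_mult_def by (simp, intro sum.cong) (auto simp: axis_def algebra_simps)
      then show ?thesis by (simp add: sum.distrib matrix_vector_mult_def mult.commute)
    qed
    moreover have "(\<Sum>i\<in>UNIV. \<bar>(x + t *\<^sub>R axis j 1)$i\<bar> powr p)
       = \<bar>x$j + t\<bar> powr p + (\<Sum>i\<in>UNIV-{j}. \<bar>x$i\<bar> powr p)"
      by (subst sum.remove[of UNIV j]) (auto simp: axis_def intro!: sum.cong)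
    ultimately show ?thesis unfolding Fv_def q_def by simp
  qed
  have q0: "q 0 = Fv p lam A y x" using eq[of 0] by simp
  have d1: "((\<lambda>t. \<bar>x$j + t\<bar> powr p) has_real_derivative gd p (x$j)) (at 0)"
  proof -
    have "((\<lambda>t. x$j + t) has_real_derivative 1) (at 0)" by (auto intro!: derivative_eq_intros)
    from psi_chain[OF assms(1) this] show ?thesis by simp
  qed
  have d2: "((\<lambda>t. 1/2 * (\<Sum>k\<in>UNIV. ((A *v x)$k + t * A$k$j - y$k)^2)) has_real_derivative
      (\<Sum>k\<in>UNIV. ((A *v x)$k - y$k) * A$k$j)) (at 0)"
    by (rule derivative_eq_intros DERIV_sum refl)+ (auto simp: sum_distrib_left algebra_simps intro!: sum.cong)
  have dq: "(q has_real_derivative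
      (\<Sum>k\<in>UNIV. ((A *v x)$k - y$k) * A$k$j) + lam * (gd p (x$j) + 0)) (at 0)"
    unfolding q_def by (intro DERIV_add DERIV_cmult d1 d2 DERIV_const)
  have mn: "\<forall>t. \<bar>0 - t\<bar> < 1 \<longrightarrow> q 0 \<le> q t" using opt eq q0 by metis
  have "(\<Sum>k\<in>UNIV. ((A *v x)$k - y$k) * A$k$j) + lam * (gd p (x$j) + 0) = 0"
    by (rule DERIV_local_min[OF dq zero_less_one mn])
  then have "(\<Sum>k\<in>UNIV. ((A *v x)$k - y$k) * A$k$j) + lam * gd p (x$j) = 0"
    by simp
  moreover have "(\<Sum>k\<in>UNIV. A$k$j * (y$k - (A *v x)$k)) = - (\<Sum>k\<in>UNIV. ((A *v x)$k - y$k) * A$k$j)"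
    by (simp add: sum_negf[symmetric] algebra_simps)
  ultimately show ?thesis by linarith
qed

lemma vec_diff:
  fixes f :: "'k::finite \<Rightarrow> 'a::euclidean_space \<Rightarrow> 'b::euclidean_space"
  assumes "\<And>k. f k differentiable (at a)"
  shows "(\<lambda>w. \<chi> k. f k w) differentiable (at a)"
proof (subst differentiable_componentwise_within, intro ballI)
  fix b :: "'b^'k" assume "b \<in> Basis"
  then obtain k u where b: "b = axis k u" "u \<in> Basis" unfolding Basis_vec_def by auto
  have "(\<lambda>x. f k x \<bullet> u) differentiable at a"
    using assms[of k] differentiable_componentwise_within b(2) by blast
  then show "(\<lambda>x. (\<chi> k. f k x) \<bullet> b) differentiable at a" by (simp add: b inner_axis)
qed

lemma entry_diff: "(\<lambda>w::((real^'n^'m) \<times> 'b::real_normed_vector). (fst w)$k$j) differentiable F"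
proof -
  have "bounded_linear (\<lambda>w::((real^'n^'m) \<times> 'b). (fst w)$k$j)"
    using bounded_linear_compose[OF bounded_linear_vec_nth[of j]
        bounded_linear_compose[OF bounded_linear_vec_nth[of k] bounded_linear_fst]]
    by (simp add: o_def)
  then show ?thesis by (rule bounded_linear_imp_differentiable)
qed

lemma snd_diff: "(\<lambda>w::('a::real_normed_vector \<times> (real^'m)). (snd w)$k) differentiable F"
proof -
  have "bounded_linear (\<lambda>w::('a \<times> (real^'m)). (snd w)$k)"
    using bounded_linear_compose[OF bounded_linear_vec_nth[of k] bounded_linear_snd]
    by (simp add: o_def)
  then show ?thesis by (rule bounded_linear_imp_differentiable)
qed

definition ct :: "(real^'n^'m) \<times> (real^'m) \<Rightarrow> 'n \<Rightarrow> real" where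
  "ct w j = (\<Sum>k\<in>UNIV. (fst w)$k$j * (snd w)$k)"

lemma ct_diff: "(\<lambda>w. ct w j) differentiable (at a within S)"
  unfolding ct_def by (intro differentiable_sum ballI differentiable_mult entry_diff snd_diff) auto

lemma negN: "negligible {w::((real^'n^'m) \<times> (real^'m)). ct w i = 0}"
proof -
  define k0 where "k0 = (undefined :: 'm)"
  define E :: "(real^'n^'m) \<times> (real^'m)" where "E = (axis k0 (axis i 1), 0)"
  define c where "c w = - (\<Sum>k\<in>UNIV-{k0}. (fst w)$k$i * (snd w)$k) / (snd w)$k0" for w :: "(real^'n^'m) \<times> (real^'m)"
  define \<Psi> where "\<Psi> w = w + c w *\<^sub>R E" for w
  define H1 where "H1 = {w::((real^'n^'m) \<times> (real^'m)). (0, axis k0 1) \<bullet> w = 0}"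
  define H2 where "H2 = {w::((real^'n^'m) \<times> (real^'m)). E \<bullet> w = 0}"
  define V where "V = {w::((real^'n^'m) \<times> (real^'m)). (snd w)$k0 \<noteq> 0}"
  have H1e: "w \<in> H1 \<longleftrightarrow> (snd w)$k0 = 0" for w
    unfolding H1_def by (cases w) (simp add: inner_prod_def inner_axis')
  have H2e: "w \<in> H2 \<longleftrightarrow> (fst w)$k0$i = 0" for w
    unfolding H2_def E_def by (cases w) (simp add: inner_prod_def inner_axis')
  have nH1: "negligible H1" unfolding H1_def
    by (rule negligible_hyperplane) (simp add: zero_prod_def)
  have nH2: "negligible H2" unfolding H2_def E_def
    by (rule negligible_hyperplane) (simp add: zero_prod_def)
  have dif: "\<Psi> differentiable_on (H2 \<inter> V)"
  proof (rule differentiable_at_imp_differentiable_on)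
    fix w assume "w \<in> H2 \<inter> V"
    then have "(snd w)$k0 \<noteq> 0" unfolding V_def by auto
    then show "\<Psi> differentiable at w"
      unfolding \<Psi>_def c_def
      by (intro differentiable_add differentiable_ident differentiable_scaleR differentiable_const
          differentiable_divide differentiable_minus differentiable_sum ballI differentiable_mult
          entry_diff snd_diff) auto
  qed
  have "negligible (\<Psi> ` (H2 \<inter> V))"
    by (rule negligible_differentiable_image_negligible[OF order_refl _ dif])
      (rule negligible_subset[OF nH2], auto)
  have sub: "{w. ct w i = 0} \<subseteq> H1 \<union> \<Psi> ` (H2 \<inter> V)"
  proof
    fix w :: "(real^'n^'m) \<times> (real^'m)" assume "w \<in> {w. ct w i = 0}"
    then have ct0: "ct w i = 0" by simp
    obtain A r where w: "w = (A, r)" by (cases w)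
    show "w \<in> H1 \<union> \<Psi> ` (H2 \<inter> V)"
    proof (cases "r$k0 = 0")
      case True then show ?thesis using H1e w by auto
    next
      case False
      define w' where "w' = w - (A$k0$i) *\<^sub>R E"
      have fw': "(fst w')$k$j = A$k$j - (if k = k0 \<and> j = i then A$k0$i else 0)" for k j
        unfolding w'_def w E_def by (simp add: axis_def)
      have sw': "snd w' = r" unfolding w'_def w E_def by simp
      have "w' \<in> H2" using H2e fw' by simp
      moreover have "w' \<in> V" using V_def sw' False by simp
      moreover have "c w' = A$k0$i"
      proof -
        have "c w' = - (\<Sum>k\<in>UNIV-{k0}. A$k$i * r$k) / r$k0"
        proof -
          have "(\<Sum>x\<in>UNIV-{k0}. (A$x$i - (if x = k0 \<and> i = i then A$k0$i else 0)) * r$x)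
              = (\<Sum>k\<in>UNIV-{k0}. A$k$i * r$k)" by (rule sum.cong) auto
          then show ?thesis unfolding c_def sw' fw' by simp
        qed
        moreover have "A$k0$i * r$k0 + (\<Sum>k\<in>UNIV-{k0}. A$k$i * r$k) = 0"
          using ct0 unfolding ct_def w by (simp add: sum.remove[of UNIV k0])
        ultimately have "c w' * r$k0 = A$k0$i * r$k0" using False by (simp add: field_simps)
        then show ?thesis using False by simp
      qed
      moreover have "\<Psi> w' = w" unfolding \<Psi>_def using calculation(3) w'_def by simp
      ultimately show ?thesis by blast
    qed
  qed
  show ?thesis
    by (rule negligible_subset[OF _ sub], rule negligible_Un[OF nH1]) fact
qed

definition PhiZ :: "real \<Rightarrow> real \<Rightarrow> 'n set \<Rightarrow> (real^'n^'m) \<times> (real^'m) \<Rightarrow> (real^'n^'m) \<times> (real^'m)" where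
  "PhiZ lam p Z w = (fst w, (\<chi> k. \<Sum>j\<in>UNIV. (fst w)$k$j * (if j \<in> Z then 0 else hv lam p (ct w j))) + snd w)"

lemma coef_diff:
  assumes "p > 1" "lam > 0" "j \<notin> Z \<longrightarrow> ct w j \<noteq> 0"
  shows "(\<lambda>w. if j \<in> Z then 0 else hv lam p (ct w j)) differentiable (at w)"
proof (cases "j \<in> Z")
  case True then show ?thesis by simp
next
  case False
  have "(hv lam p \<circ> (\<lambda>w. ct w j)) differentiable (at w)"
    using False assms by (intro differentiable_chain_at ct_diff hv_diff) auto
  then show ?thesis using False by (simp add: o_def)
qed

lemma negPhi:
  fixes Z :: "'n::finite set"
  assumes "p > 1" "lam > 0"
  shows "negligible (PhiZ lam p Z ` ({w::(real^'n^'m) \<times> (real^'m). ct w i = 0} \<inter> {w. \<forall>j. j \<notin> Z \<longrightarrow> ct w j \<noteq> 0}))"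
    (is "negligible (_ ` ?S)")
proof (rule negligible_differentiable_image_negligible[OF order_refl])
  show "negligible ?S"
    by (rule negligible_subset[OF negN]) auto
  show "PhiZ lam p Z differentiable_on ?S"
  proof (rule differentiable_at_imp_differentiable_on)
    fix w
    assume "w \<in> ?S"
    then have nz: "\<And>j. j \<notin> Z \<longrightarrow> ct w j \<noteq> 0" by auto
    have fd: "(\<lambda>w::(real^'n^'m) \<times> (real^'m). fst w) differentiable at w"
      by (rule bounded_linear_imp_differentiable[OF bounded_linear_fst])
    have sd: "(\<lambda>w::(real^'n^'m) \<times> (real^'m). snd w) differentiable at w"
      by (rule bounded_linear_imp_differentiable[OF bounded_linear_snd])
    have vd: "(\<lambda>w. \<chi> k. \<Sum>j\<in>UNIV. (fst w)$k$j * (if j \<in> Z then 0 else hv lam p (ct w j))) differentiable at w"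
      by (intro vec_diff differentiable_sum ballI differentiable_mult entry_diff coef_diff assms nz) auto
    show "PhiZ lam p Z differentiable at w"
      unfolding PhiZ_def by (intro differentiable_Pair fd differentiable_add vd sd)
  qed
qed

lemma uniq:
  fixes A :: "real ^ 'n ^ 'm"
  assumes "p > 1" "lam > 0"
    and fx: "\<And>j. (\<Sum>k\<in>UNIV. A$k$j * (y$k - (A *v x)$k)) = lam * gd p (x$j)"
    and fz: "\<And>j. (\<Sum>k\<in>UNIV. A$k$j * (y$k - (A *v z)$k)) = lam * gd p (z$j)"
  shows "x = z"
proof -
  define T where "T j = (x$j - z$j) * (gd p (x$j) - gd p (z$j))" for j
  have Tpos: "T j > 0" if "x$j \<noteq> z$j" for j
  proof (cases "x$j < z$j")
    case True
    then have "gd p (x$j) < gd p (z$j)" using gd_mono assms by auto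
    then show ?thesis using True T_def by (simp add: mult_neg_neg)
  next
    case False
    then have "z$j < x$j" using that by auto
    then have "gd p (z$j) < gd p (x$j)" using gd_mono assms by auto
    then show ?thesis using \<open>z$j < x$j\<close> T_def by simp
  qed
  have Tnn: "T j \<ge> 0" for j using Tpos[of j] T_def by (cases "x$j = z$j") auto
  have Av: "(\<Sum>j\<in>UNIV. A$k$j * (x$j - z$j)) = (A *v x)$k - (A *v z)$k" for k
    by (simp add: matrix_vector_mult_def right_diff_distrib sum_subtractf)
  have "(\<Sum>j\<in>UNIV. lam * T j) = (\<Sum>j\<in>UNIV. (x$j - z$j) * (\<Sum>k\<in>UNIV. A$k$j * ((A *v z)$k - (A *v x)$k)))"
  proof (rule sum.cong[OF refl])
    fix j
    have "(\<Sum>k\<in>UNIV. A$k$j * ((A *v z)$k - (A *v x)$k))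
        = (\<Sum>k\<in>UNIV. A$k$j * (y$k - (A *v x)$k)) - (\<Sum>k\<in>UNIV. A$k$j * (y$k - (A *v z)$k))"
    proof -
      have "(\<Sum>k\<in>UNIV. A$k$j * ((A *v z)$k - (A *v x)$k))
          = (\<Sum>k\<in>UNIV. A$k$j * (y$k - (A *v x)$k) - A$k$j * (y$k - (A *v z)$k))"
        by (rule sum.cong) (auto simp: algebra_simps)
      also have "\<dots> = (\<Sum>k\<in>UNIV. A$k$j * (y$k - (A *v x)$k)) - (\<Sum>k\<in>UNIV. A$k$j * (y$k - (A *v z)$k))"
        by (rule sum_subtractf)
      finally show ?thesis .
    qed
    also have "\<dots> = lam * (gd p (x$j) - gd p (z$j))" using fx fz by (simp add: algebra_simps)
    finally show "lam * T j = (x$j - z$j) * (\<Sum>k\<in>UNIV. A$k$j * ((A *v z)$k - (A *v x)$k))"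
      unfolding T_def by simp
  qed
  also have "\<dots> = (\<Sum>k\<in>UNIV. ((A *v z)$k - (A *v x)$k) * (\<Sum>j\<in>UNIV. A$k$j * (x$j - z$j)))"
  proof -
    have "(\<Sum>j\<in>UNIV. (x$j - z$j) * (\<Sum>k\<in>UNIV. A$k$j * ((A *v z)$k - (A *v x)$k)))
      = (\<Sum>j\<in>UNIV. \<Sum>k\<in>UNIV. ((A *v z)$k - (A *v x)$k) * (A$k$j * (x$j - z$j)))"
      by (simp add: sum_distrib_left mult.commute mult.left_commute)
    also have "\<dots> = (\<Sum>k\<in>UNIV. \<Sum>j\<in>UNIV. ((A *v z)$k - (A *v x)$k) * (A$k$j * (x$j - z$j)))"
      by (rule sum.swap)
    also have "\<dots> = (\<Sum>k\<in>UNIV. ((A *v z)$k - (A *v x)$k) * (\<Sum>j\<in>UNIV. A$k$j * (x$j - z$j)))"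
      by (simp add: sum_distrib_left)
    finally show ?thesis .
  qed
  also have "\<dots> = (\<Sum>k\<in>UNIV. ((A *v z)$k - (A *v x)$k) * ((A *v x)$k - (A *v z)$k))"
    by (simp only: Av)
  also have "\<dots> = - (\<Sum>k\<in>UNIV. ((A *v x)$k - (A *v z)$k)^2)"
  proof -
    have e: "((A *v z)$k - (A *v x)$k) * ((A *v x)$k - (A *v z)$k) = - (((A *v x)$k - (A *v z)$k)^2)" for k
      by (simp add: power2_eq_square algebra_simps)
    show ?thesis by (simp only: e sum_negf)
  qed
  also have "\<dots> \<le> 0" by (simp add: sum_nonneg)
  finally have "(\<Sum>j\<in>UNIV. lam * T j) \<le> 0" .
  moreover have "(\<Sum>j\<in>UNIV. lam * T j) \<ge> 0" using Tnn assms by (intro sum_nonneg) auto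
  ultimately have "(\<Sum>j\<in>UNIV. lam * T j) = 0" by linarith
  then have "\<forall>j\<in>UNIV. lam * T j = 0" using Tnn assms by (subst sum_nonneg_eq_0_iff[symmetric]) auto
  then have "\<forall>j. T j = 0" using assms by auto
  then have "\<forall>j. x$j = z$j" using Tpos by (metis less_irrefl)
  then show ?thesis by (simp add: vec_eq_iff)
qed

lemma gd_nz: "p > 1 \<Longrightarrow> t \<noteq> 0 \<Longrightarrow> gd p t \<noteq> 0"
  by (simp add: gd_def sgn_if)

lemma bad:
  fixes A :: "real ^ 'n ^ 'm"
  assumes "p > 1" "lam > 0"
    and fx: "\<And>j. (\<Sum>k\<in>UNIV. A$k$j * (y$k - (A *v x)$k)) = lam * gd p (x$j)"
    and xi: "x$i = 0"
  shows "(A, y) \<in> PhiZ lam p {j. x$j = 0} ` ({w::(real^'n^'m) \<times> (real^'m). ct w i = 0} \<inter> {w. \<forall>j. j \<notin> {j. x$j = 0} \<longrightarrow> ct w j \<noteq> 0})"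
proof -
  define w where "w = (A, y - A *v x)"
  have ctw: "ct w j = lam * gd p (x$j)" for j
    unfolding ct_def w_def using fx[of j] by simp
  have hx: "hv lam p (ct w j) = x$j" for j using ctw hv_gd assms by simp
  have m1: "w \<in> {w. ct w i = 0}" using ctw xi by (simp add: gd_def)
  have m2: "w \<in> {w. \<forall>j. j \<notin> {j. x$j = 0} \<longrightarrow> ct w j \<noteq> 0}"
    using ctw gd_nz assms by auto
  have m3: "PhiZ lam p {j. x$j = 0} w = (A, y)"
  proof -
    have "(\<chi> k. \<Sum>j\<in>UNIV. A$k$j * (if j \<in> {j. x$j = 0} then 0 else hv lam p (ct w j))) = A *v x"
      unfolding matrix_vector_mult_def by (auto simp: hx vec_eq_iff intro!: sum.cong)
    then show ?thesis unfolding PhiZ_def by (simp add: w_def)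
  qed
  show ?thesis by (rule image_eqI[where f="PhiZ lam p {j. x$j = 0}" and x=w, OF m3[symmetric] IntI[OF m1 m2]])
qed

theorem theorem4p2:
  fixes p lam :: real
  assumes "p > 1" and "CARD('m::finite) \<le> CARD('n::finite)" and "lam > 0"
  shows "AE Ay in (lborel :: ((real ^ 'n ^ 'm) \<times> (real ^ 'm)) measure).
           \<exists>x. is_opt p lam (fst Ay) (snd Ay) x
             \<and> (\<forall>z. is_opt p lam (fst Ay) (snd Ay) z \<longrightarrow> z = x)
             \<and> card (supp x) = CARD('n)"
proof -
  define T where "T = (\<Union>Z\<in>(UNIV::'n set set). \<Union>i\<in>(UNIV::'n set).
     PhiZ lam p Z ` ({w::(real^'n^'m) \<times> (real^'m). ct w i = 0} \<inter> {w. \<forall>j. j \<notin> Z \<longrightarrow> ct w j \<noteq> 0}))"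
  have n1: "negligible (PhiZ lam p Z ` ({w::(real^'n^'m) \<times> (real^'m). ct w i = 0} \<inter> {w. \<forall>j. j \<notin> Z \<longrightarrow> ct w j \<noteq> 0}))"
    for Z i using negPhi[OF assms(1,3)] by blast
  have n2: "negligible (\<Union>i\<in>(UNIV::'n set). PhiZ lam p Z ` ({w::(real^'n^'m) \<times> (real^'m). ct w i = 0} \<inter> {w. \<forall>j. j \<notin> Z \<longrightarrow> ct w j \<noteq> 0}))"
    for Z apply (rule negligible_Union) apply simp apply (erule imageE) apply (simp only:) apply (rule n1) done
  have "negligible T" unfolding T_def apply (rule negligible_Union) apply simp apply (erule imageE) apply (simp only:) apply (rule n2) done
  then have "T \<in> null_sets lebesgue" using negligible_iff_null_sets by blast
  then have ae: "AE Ay in lebesgue. Ay \<notin> T" by (rule AE_not_in)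
  have p0: "p > 0" using assms by simp
  have good: "\<exists>x. is_opt p lam (fst Ay) (snd Ay) x
             \<and> (\<forall>z. is_opt p lam (fst Ay) (snd Ay) z \<longrightarrow> z = x)
             \<and> card (supp x) = CARD('n)" if nT: "Ay \<notin> T" for Ay :: "(real^'n^'m) \<times> (real^'m)"
  proof -
    obtain A y where Ay: "Ay = (A, y)" by (cases Ay)
    have opt_iff: "is_opt p lam A y z \<longleftrightarrow> (\<forall>u. Fv p lam A y z \<le> Fv p lam A y u)" for z
      unfolding is_opt_def by (simp add: lp_obj_eq[OF p0])
    obtain x where x: "\<forall>u. Fv p lam A y x \<le> Fv p lam A y u"
      using exists_min[OF assms(1,3), of A y] by blast
    have fx: "\<And>j. (\<Sum>k\<in>UNIV. A$k$j * (y$k - (A *v x)$k)) = lam * gd p (x$j)"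
      by (rule foc[OF assms(1,3) x])
    have "is_opt p lam A y x" using x opt_iff by blast
    moreover have "\<forall>z. is_opt p lam A y z \<longrightarrow> z = x"
    proof (intro allI impI)
      fix z assume "is_opt p lam A y z"
      then have "\<forall>u. Fv p lam A y z \<le> Fv p lam A y u" using opt_iff by blast
      have fz: "\<And>j. (\<Sum>k\<in>UNIV. A$k$j * (y$k - (A *v z)$k)) = lam * gd p (z$j)"
        by (rule foc[OF assms(1,3) \<open>\<forall>u. Fv p lam A y z \<le> Fv p lam A y u\<close>])
      show "z = x" using uniq[OF assms(1,3) fz fx] .
    qed
    moreover have "card (supp x) = CARD('n)"
    proof (rule ccontr)
      assume "card (supp x) \<noteq> CARD('n)"
      then have "supp x \<noteq> UNIV" by auto
      then obtain i where xi: "x$i = 0" unfolding supp_def by auto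
      have "(A, y) \<in> T" unfolding T_def
        by (rule UN_I[OF UNIV_I], rule UN_I[OF UNIV_I], rule bad[OF assms(1,3) fx xi])
      then show False using nT Ay by simp
    qed
    ultimately show ?thesis unfolding Ay fst_conv snd_conv by blast
  qed
  have "AE Ay in (lebesgue :: ((real^'n^'m) \<times> (real^'m)) measure). \<exists>x. is_opt p lam (fst Ay) (snd Ay) x
             \<and> (\<forall>z. is_opt p lam (fst Ay) (snd Ay) z \<longrightarrow> z = x)
             \<and> card (supp x) = CARD('n)"
    using ae by eventually_elim (rule good)
  then show ?thesis by (simp add: AE_completion_iff)
qed

end
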